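(* Let $m\ge2$ and $0<\alpha<1$. An arithmetic box space $\square_{(G_m(N_k))_k}G_m$ has property $D_\alpha$ if and only if there is a constant $c>0$ such that $\operatorname{ord}_m(N_k)\ge c\,N_k^{\alpha/(1-\alpha)}$ for all $k$.
   Context: $G_m$ is the subgroup of $GL_2(\mathbb Z[1/m])$ of matrices $\begin{pmatrix} m^k & r\\ 0&1\end{pmatrix}$, $k\in\mathbb Z$, $r\in\mathbb Z[1/m]$, generated by $A=\begin{pmatrix}1&1\\0&1\end{pmatrix}$, $T=\begin{pmatrix}m&0\\0&1\end{pmatrix}$. For $N$ coprime to $m$, $G_m(N)$ is the kernel of reduction modulo $N$, $G_m\to GL_2(\mathbb Z/N\mathbb Z)$, and $\operatorname{ord}_m(N)$ is the multiplicative order of $m$ modulo $N$. An arithmetic box space of $G_m$ is the family of Cayley graphs $\mathrm{Cay}(G_m/G_m(N_k),\{A,T\})$ where $(N_k)$ is a strictly increasing sequence of integers $\ge2$ coprime to $m$ with $N_k\mid N_{k+1}$. It has property $D_\alpha$ if there is $C>0$ with $\operatorname{diam}\mathrm{Cay}(G_m/G_m(N_k),\{A,T\})\ge C|G_m/G_m(N_k)|^\alpha$ for all $k$. *)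

theory Defs
  imports "HOL-Analysis.Analysis" "HOL-Number_Theory.Number_Theory"
begin

type_synonym qmat = "rat^2^2"

definition mat2 :: "rat \<Rightarrow> rat \<Rightarrow> rat \<Rightarrow> rat \<Rightarrow> qmat" where
  "mat2 a b c d = vector [vector [a, b], vector [c, d]]"

text \<open>The ring Z[1/m] inside the rationals.\<close>
definition Zinv :: "nat \<Rightarrow> rat set" where
  "Zinv m = {q. \<exists>a::int. \<exists>j::nat. q = of_int a / of_nat m ^ j}"

text \<open>G_m: matrices (m^k, r; 0, 1) with k in Z and r in Z[1/m].\<close>
definition Gm :: "nat \<Rightarrow> qmat set" where
  "Gm m = {mat2 (of_nat m powi k) r 0 1 | k r. r \<in> Zinv m}"

definition genA :: qmat where "genA = mat2 1 1 0 1"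
definition genT :: "nat \<Rightarrow> qmat" where "genT m = mat2 (of_nat m) 0 0 1"

text \<open>Symmetric generating set: A, T and their inverses (undirected Cayley graph).\<close>
definition gens :: "nat \<Rightarrow> qmat set" where
  "gens m = {genA, mat2 1 (-1) 0 1, genT m, mat2 (1 / of_nat m) 0 0 1}"

text \<open>Congruence mod N in Z[1/m]: difference lies in the ideal N Z[1/m].
  Since N is coprime to m, this is exactly equality after reduction Z[1/m] -> Z/NZ.\<close>
definition congZ :: "nat \<Rightarrow> nat \<Rightarrow> rat \<Rightarrow> rat \<Rightarrow> bool" where
  "congZ m N x y \<longleftrightarrow> (\<exists>z \<in> Zinv m. x - y = of_nat N * z)"

text \<open>G_m(N): kernel of reduction modulo N.\<close>
definition GmN :: "nat \<Rightarrow> nat \<Rightarrow> qmat set" where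
  "GmN m N = {g \<in> Gm m. \<forall>i j. congZ m N (g $ i $ j) (mat 1 $ i $ j)}"

definition lcoset :: "nat \<Rightarrow> nat \<Rightarrow> qmat \<Rightarrow> qmat set" where
  "lcoset m N g = (\<lambda>h. g ** h) ` GmN m N"

text \<open>The quotient G_m / G_m(N) as a set of cosets.\<close>
definition quot :: "nat \<Rightarrow> nat \<Rightarrow> qmat set set" where
  "quot m N = lcoset m N ` Gm m"

text \<open>Graph distance in Cay(G_m/G_m(N), {A,T}) between the cosets of g and g'.\<close>
definition cay_dist :: "nat \<Rightarrow> nat \<Rightarrow> qmat \<Rightarrow> qmat \<Rightarrow> nat" where
  "cay_dist m N g g' = (LEAST n. \<exists>w. length w = n \<and> set w \<subseteq> gens m \<and>
       lcoset m N (foldl (**) g w) = lcoset m N g')"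

definition cay_diam :: "nat \<Rightarrow> nat \<Rightarrow> nat" where
  "cay_diam m N = Sup {cay_dist m N g g' | g g'. g \<in> Gm m \<and> g' \<in> Gm m}"

definition arith_box_seq :: "nat \<Rightarrow> (nat \<Rightarrow> nat) \<Rightarrow> bool" where
  "arith_box_seq m N \<longleftrightarrow> strict_mono N \<and> (\<forall>k. N k \<ge> 2 \<and> coprime (N k) m \<and> N k dvd N (Suc k))"

definition property_D :: "real \<Rightarrow> nat \<Rightarrow> (nat \<Rightarrow> nat) \<Rightarrow> bool" where
  "property_D \<alpha> m N \<longleftrightarrow> (\<exists>C>0. \<forall>k. real (cay_diam m (N k)) \<ge> C * real (card (quot m (N k))) powr \<alpha>)"

end

theory Submission
  imports Defs
begin

lemma mat2_eq: "mat2 a b c d = mat2 a' b' c' d' \<longleftrightarrow> a=a' \<and> b=b' \<and> c=c' \<and> d=d'"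
  by (simp add: mat2_def vec_eq_iff forall_2)
lemma mat2_mult: "mat2 a b c d ** mat2 a' b' c' d' = mat2 (a*a'+b*c') (a*b'+b*d') (c*a'+d*c') (c*b'+d*d')"
  by (simp add: mat2_def matrix_matrix_mult_def vec_eq_iff forall_2 sum_2)
lemma mat1: "(mat 1 :: qmat) = mat2 1 0 0 1"
  by (simp add: mat2_def mat_def vec_eq_iff forall_2)
lemma mat2_nth: "mat2 a b c d $ 1 $ 1 = a" "mat2 a b c d $ 1 $ 2 = b" "mat2 a b c d $ 2 $ 1 = c" "mat2 a b c d $ 2 $ 2 = d"
  by (simp_all add: mat2_def)

definition NZ :: "nat \<Rightarrow> nat \<Rightarrow> rat set" where
  "NZ m N = {q. \<exists>z\<in>Zinv m. q = of_nat N * z}"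

lemma congZ_NZ: "congZ m N x y \<longleftrightarrow> x - y \<in> NZ m N"
  by (auto simp: congZ_def NZ_def)

lemma Zinv_int: "of_int a \<in> Zinv m"
  unfolding Zinv_def by (rule CollectI, rule exI[of _ a], rule exI[of _ 0]) simp

lemma Zinv_nat: "of_nat a \<in> Zinv m"
  using Zinv_int[of "int a" m] by simp

lemma Zinv_add: assumes "m > 0" "x \<in> Zinv m" "y \<in> Zinv m" shows "x + y \<in> Zinv m"
proof -
  obtain a i b j where x: "x = of_int a / of_nat m ^ i" and y: "y = of_int b / of_nat m ^ j"
    using assms unfolding Zinv_def by blast
  have "x + y = of_int (a * int m ^ j + b * int m ^ i) / of_nat m ^ (i+j)"
    using assms(1) by (simp add: x y field_simps power_add)
  then show ?thesis unfolding Zinv_def by blast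
qed

lemma Zinv_mult: assumes "x \<in> Zinv m" "y \<in> Zinv m" shows "x * y \<in> Zinv m"
proof -
  obtain a i b j where x: "x = of_int a / of_nat m ^ i" and y: "y = of_int b / of_nat m ^ j"
    using assms unfolding Zinv_def by blast
  have "x * y = of_int (a * b) / of_nat m ^ (i+j)"
    by (simp add: x y power_add)
  then show ?thesis unfolding Zinv_def by blast
qed

lemma Zinv_uminus: assumes "x \<in> Zinv m" shows "- x \<in> Zinv m"
  using Zinv_mult[OF Zinv_int[of "-1"] assms] by simp

lemma Zinv_diff: assumes "m > 0" "x \<in> Zinv m" "y \<in> Zinv m" shows "x - y \<in> Zinv m"
  using Zinv_add[OF assms(1,2) Zinv_uminus[OF assms(3)]] by simp

lemma Zinv_powi: assumes "m > 0" shows "of_nat m powi k \<in> Zinv m"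
proof (cases "k \<ge> 0")
  case True
  define n where "n = nat k"
  then have "k = int n" using True by simp
  then show ?thesis using Zinv_nat[of "m^n" m] by simp
next
  case False
  define n where "n = nat (-k)"
  then have "k = - int n" using False by simp
  then have "(of_nat m powi k :: rat) = of_int 1 / of_nat m ^ n"
    using power_int_minus[of "of_nat m :: rat" "int n"] by (simp add: divide_inverse)
  then show ?thesis unfolding Zinv_def by blast
qed

lemma NZ_add: assumes "m > 0" "x \<in> NZ m N" "y \<in> NZ m N" shows "x + y \<in> NZ m N"
proof -
  obtain z w where "z \<in> Zinv m" "w \<in> Zinv m" "x = of_nat N * z" "y = of_nat N * w"
    using assms unfolding NZ_def by blast
  then show ?thesis unfolding NZ_def using Zinv_add[OF assms(1)] by (auto simp: distrib_left[symmetric])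
qed

lemma NZ_mult: assumes "x \<in> NZ m N" "u \<in> Zinv m" shows "x * u \<in> NZ m N"
  using assms Zinv_mult unfolding NZ_def by (fastforce simp: mult.assoc)

lemma NZ_uminus: assumes "x \<in> NZ m N" shows "- x \<in> NZ m N"
  using NZ_mult[OF assms Zinv_int[of "-1"]] by simp

lemma NZ_diff: assumes "m > 0" "x \<in> NZ m N" "y \<in> NZ m N" shows "x - y \<in> NZ m N"
  using NZ_add[OF assms(1,2) NZ_uminus[OF assms(3)]] by simp

lemma NZ_zero: "0 \<in> NZ m N"
  unfolding NZ_def using Zinv_int[of 0 m] by force

lemma NZ_int_mult: "of_int (int N * c) \<in> NZ m N"
  unfolding NZ_def using Zinv_int[of c m] by force

lemma NZ_int: assumes "coprime N m" shows "of_int t \<in> NZ m N \<longleftrightarrow> int N dvd t"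
proof
  assume "int N dvd t"
  then obtain c where "t = int N * c" by blast
  then show "of_int t \<in> NZ m N" using NZ_int_mult by simp
next
  assume "of_int t \<in> NZ m N"
  then obtain a j where "(of_int t :: rat) = of_nat N * (of_int a / of_nat m ^ j)"
    unfolding NZ_def Zinv_def by blast
  then have "(of_int t :: rat) * of_nat m ^ j = of_nat N * of_int a \<or> m = 0"
    by (cases "m = 0") (auto simp: field_simps)
  then have "t * int m ^ j = int N * a \<or> m = 0"
    by (metis (mono_tags) of_int_eq_iff of_int_mult of_int_of_nat_eq of_int_power)
  then show "int N dvd t"
  proof
    assume h: "t * int m ^ j = int N * a"
    have "coprime (int N) (int m ^ j)" using assms by simp
    moreover have "int N dvd t * int m ^ j" using h by simp
    ultimately show ?thesis using coprime_dvd_mult_left_iff by blast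
  next
    assume "m = 0" then have "N = 1" using assms by simp
    then show ?thesis by simp
  qed
qed

lemma NZ_unit: assumes "m > 0" shows "x * of_nat m powi i \<in> NZ m N \<longleftrightarrow> x \<in> NZ m N"
proof
  assume "x * of_nat m powi i \<in> NZ m N"
  from NZ_mult[OF this Zinv_powi[OF assms, of "-i"]]
  show "x \<in> NZ m N" using assms by (simp add: power_int_minus mult.assoc)
qed (rule NZ_mult[OF _ Zinv_powi[OF assms]])

lemma powi_NZ: assumes "m \<ge> 2" "coprime N m"
  shows "of_nat m powi j - 1 \<in> NZ m N \<longleftrightarrow> int (ord N m) dvd j"
proof -
  have nat_case: "(of_nat m ^ n - 1 :: rat) \<in> NZ m N \<longleftrightarrow> int (ord N m) dvd int n" for n
  proof -
    have e: "(of_nat m ^ n - 1 :: rat) = of_int (int m ^ n - 1)" by simp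
    have "(of_nat m ^ n - 1 :: rat) \<in> NZ m N \<longleftrightarrow> int N dvd int m ^ n - 1"
      unfolding e by (rule NZ_int[OF assms(2)])
    also have "\<dots> \<longleftrightarrow> [m ^ n = 1] (mod N)"
      by (metis cong_iff_dvd_diff cong_int_iff int_ops(2) of_nat_power)
    also have "\<dots> \<longleftrightarrow> ord N m dvd n" by (rule ord_divides)
    finally show ?thesis by simp
  qed
  show ?thesis
  proof (cases "j \<ge> 0")
    case True
    define n where "n = nat j"
    then have "j = int n" using True by simp
    then show ?thesis using nat_case[of n] by simp
  next
    case False
    define n where "n = nat (-j)"
    then have j: "j = - int n" using False by simp
    have m0: "(of_nat m :: rat) \<noteq> 0" using assms by simp
    have "(of_nat m powi j - 1) * of_nat m powi int n = - (of_nat m ^ n - 1 :: rat)"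
      using m0 by (simp add: j power_int_minus field_simps)
    then have "of_nat m powi j - 1 \<in> NZ m N \<longleftrightarrow> - (of_nat m ^ n - 1 :: rat) \<in> NZ m N"
      using NZ_unit[of m "of_nat m powi j - 1" "int n" N] assms by simp
    also have "\<dots> \<longleftrightarrow> (of_nat m ^ n - 1 :: rat) \<in> NZ m N"
      using NZ_uminus by fastforce
    finally show ?thesis using nat_case[of n] j by simp
  qed
qed

lemma ord_pos: assumes "coprime (N::nat) m" shows "ord N m > 0"
  using ord_eq_0[of N m] assms by simp

lemma Zinv_reduce: assumes "m \<ge> 2" "coprime N m" "N > 0" "q \<in> Zinv m"
  shows "\<exists>t<N. q - of_nat t \<in> NZ m N"
proof -
  obtain a j where q: "q = of_int a / of_nat m ^ j" using assms unfolding Zinv_def by blast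
  define od where "od = ord N m"
  have "of_nat m powi (int (od * j)) - 1 \<in> NZ m N"
    using powi_NZ[OF assms(1,2)] unfolding od_def by simp
  then have h: "(of_nat m ^ (od*j) - 1 :: rat) \<in> NZ m N" by (metis power_int_of_nat)
  have opos: "od \<ge> 1" using ord_pos[OF assms(2)] unfolding od_def by linarith
  have m0: "(of_nat m :: rat) \<noteq> 0" using assms by simp
  have "(of_nat m ^ (od*j) :: rat) = of_nat m ^ j * of_nat m ^ ((od - 1) * j)"
    using opos by (simp add: power_add[symmetric] algebra_simps)
  then have eq: "q - of_int (a * int m ^ ((od-1)*j)) = - (of_nat m ^ (od*j) - 1) * (of_int a / of_nat m ^ j)"
    using m0 by (simp add: q field_simps)
  have h1: "q - of_int (a * int m ^ ((od-1)*j)) \<in> NZ m N"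
    unfolding eq by (rule NZ_mult[OF NZ_uminus[OF h]]) (auto simp: Zinv_def)
  define b where "b = a * int m ^ ((od-1)*j)"
  define t where "t = nat (b mod int N)"
  have tN: "t < N" using assms(3) unfolding t_def by (simp add: nat_less_iff)
  have "b = int N * (b div int N) + int t" unfolding t_def using assms(3) by simp
  then have "(of_int b :: rat) - of_nat t = of_int (int N * (b div int N))"
    by (metis add_diff_cancel_right' of_int_diff of_int_of_nat_eq)
  then have h2: "(of_int b :: rat) - of_nat t \<in> NZ m N" using NZ_int_mult by simp
  have "q - of_nat t = (q - of_int b) + (of_int b - of_nat t)" by simp
  then have "q - of_nat t \<in> NZ m N" using NZ_add[OF _ h1[folded b_def] h2] assms by simp
  then show ?thesis using tN by blast
qed


definition Em :: "nat \<Rightarrow> int \<Rightarrow> rat \<Rightarrow> qmat" where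
  "Em m k r = mat2 (of_nat m powi k) r 0 1"

lemma powi_inj: assumes "m \<ge> 2" shows "(of_nat m powi k :: rat) = of_nat m powi k' \<longleftrightarrow> k = k'"
proof
  assume h: "(of_nat m powi k :: rat) = of_nat m powi k'"
  have gt: "(1::rat) < of_nat m" using assms by simp
  show "k = k'"
  proof (rule linorder_cases[of k k'])
    assume "k < k'" then show ?thesis using power_int_strict_increasing[OF _ gt, of k k'] h by simp
  next
    assume "k' < k" then show ?thesis using power_int_strict_increasing[OF _ gt, of k' k] h by simp
  qed
qed simp

lemma Em_eq: assumes "m \<ge> 2" shows "Em m k r = Em m k' r' \<longleftrightarrow> k = k' \<and> r = r'"
  unfolding Em_def mat2_eq using powi_inj[OF assms] by auto

lemma Em_mult: assumes "m > 0"
  shows "Em m k r ** Em m k' r' = Em m (k+k') (of_nat m powi k * r' + r)"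
  unfolding Em_def mat2_mult using assms by (simp add: power_int_add)

lemma Gm_iff: "g \<in> Gm m \<longleftrightarrow> (\<exists>k r. r \<in> Zinv m \<and> g = Em m k r)"
  unfolding Gm_def Em_def by auto

lemma Em_Gm: assumes "m \<ge> 2" shows "Em m k r \<in> Gm m \<longleftrightarrow> r \<in> Zinv m"
  unfolding Gm_iff using Em_eq[OF assms] by auto

lemma GmN_Em: assumes "m \<ge> 2"
  shows "Em m j s \<in> GmN m N \<longleftrightarrow> s \<in> Zinv m \<and> of_nat m powi j - 1 \<in> NZ m N \<and> s \<in> NZ m N"
proof -
  have "Em m j s \<in> GmN m N \<longleftrightarrow> s \<in> Zinv m \<and> congZ m N (of_nat m powi j) 1 \<and> congZ m N s 0
     \<and> congZ m N 0 0 \<and> congZ m N 1 1"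
    unfolding GmN_def mem_Collect_eq Em_Gm[OF assms] forall_2 mat1 by (simp add: Em_def mat2_nth)
  then show ?thesis unfolding congZ_NZ using NZ_zero by simp
qed

lemma GmN_sub: "GmN m N \<subseteq> Gm m" unfolding GmN_def by auto

lemma Zinv_powi_mult: assumes "m > 0" "r \<in> Zinv m" shows "of_nat m powi k * r \<in> Zinv m"
  using Zinv_mult[OF Zinv_powi[OF assms(1)] assms(2)] .

lemma coset_char: assumes "m \<ge> 2" "coprime N m" "r \<in> Zinv m"
  shows "lcoset m N (Em m k r) = {Em m k' r' | k' r'. r' \<in> Zinv m \<and> int (ord N m) dvd k' - k \<and> r' - r \<in> NZ m N}"
  (is "_ = ?S")
proof
  have m0: "m > 0" using assms by simp
  show "lcoset m N (Em m k r) \<subseteq> ?S"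
  proof
    fix x assume "x \<in> lcoset m N (Em m k r)"
    then obtain h where h: "h \<in> GmN m N" "x = Em m k r ** h" unfolding lcoset_def by blast
    then obtain j s where hj: "h = Em m j s" "s \<in> Zinv m" using GmN_sub Gm_iff by blast
    then have c: "of_nat m powi j - 1 \<in> NZ m N" "s \<in> NZ m N" using h GmN_Em[OF assms(1)] by auto
    have x: "x = Em m (k+j) (of_nat m powi k * s + r)" using h hj Em_mult[OF m0] by simp
    have "of_nat m powi k * s + r \<in> Zinv m" using Zinv_add[OF m0 Zinv_powi_mult[OF m0 hj(2)] assms(3)] .
    moreover have "int (ord N m) dvd (k+j) - k" using c powi_NZ[OF assms(1,2)] by simp
    moreover have "(of_nat m powi k * s + r) - r \<in> NZ m N"
      using NZ_mult[OF c(2) Zinv_powi[OF m0, of k]] by (simp add: mult.commute)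
    ultimately show "x \<in> ?S" using x by blast
  qed
  show "?S \<subseteq> lcoset m N (Em m k r)"
  proof
    fix x assume "x \<in> ?S"
    then obtain k' r' where x: "x = Em m k' r'" "r' \<in> Zinv m" "int (ord N m) dvd k' - k" "r' - r \<in> NZ m N"
      by blast
    define s where "s = (r' - r) * of_nat m powi (-k)"
    have s1: "s \<in> Zinv m" unfolding s_def
      using Zinv_mult[OF Zinv_diff[OF m0 x(2) assms(3)] Zinv_powi[OF m0]] .
    have s2: "s \<in> NZ m N" unfolding s_def using NZ_mult[OF x(4) Zinv_powi[OF m0]] .
    have s3: "of_nat m powi (k' - k) - 1 \<in> NZ m N" using x(3) powi_NZ[OF assms(1,2)] by simp
    have hG: "Em m (k'-k) s \<in> GmN m N" using GmN_Em[OF assms(1)] s1 s2 s3 by simp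
    have mk: "(of_nat m powi k :: rat) * of_nat m powi (-k) = 1"
      using m0 by (simp add: power_int_minus)
    have e1: "of_nat m powi k * ((r' - r) * of_nat m powi - k) = (r' - r) * (of_nat m powi k * of_nat m powi (-k))"
      by (simp add: algebra_simps)
    have "Em m k r ** Em m (k'-k) s = Em m k' r'"
      unfolding Em_mult[OF m0] s_def e1 mk by simp
    then show "x \<in> lcoset m N (Em m k r)" unfolding lcoset_def using hG x(1) by force
  qed
qed

lemma coset_eq: assumes "m \<ge> 2" "coprime N m" "r \<in> Zinv m" "r' \<in> Zinv m"
  shows "lcoset m N (Em m k r) = lcoset m N (Em m k' r') \<longleftrightarrow> int (ord N m) dvd k - k' \<and> r - r' \<in> NZ m N"
proof
  have m0: "m > 0" using assms by simp
  assume "lcoset m N (Em m k r) = lcoset m N (Em m k' r')"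
  moreover have "Em m k r \<in> lcoset m N (Em m k r)"
    unfolding coset_char[OF assms(1,2,3)] using assms(3) NZ_zero by force
  ultimately have "Em m k r \<in> lcoset m N (Em m k' r')" by simp
  then show "int (ord N m) dvd k - k' \<and> r - r' \<in> NZ m N"
    unfolding coset_char[OF assms(1,2,4)] using Em_eq[OF assms(1)] by auto
next
  have m0: "m > 0" using assms by simp
  assume h: "int (ord N m) dvd k - k' \<and> r - r' \<in> NZ m N"
  have "int (ord N m) dvd k'' - k \<and> r'' - r \<in> NZ m N \<longleftrightarrow> int (ord N m) dvd k'' - k' \<and> r'' - r' \<in> NZ m N"
    for k'' r''
  proof -
    have "k'' - k' = (k'' - k) + (k - k')" "k'' - k = (k'' - k') - (k - k')" by simp_all
    moreover have "r'' - r' = (r'' - r) + (r - r')" "r'' - r = (r'' - r') - (r - r')" by simp_all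
    ultimately show ?thesis using h NZ_add[OF m0] NZ_diff[OF m0]
      by (metis dvd_add dvd_diff)
  qed
  then show "lcoset m N (Em m k r) = lcoset m N (Em m k' r')"
    unfolding coset_char[OF assms(1,2,3)] coset_char[OF assms(1,2,4)] by blast
qed


lemma foldl_mult: fixes g :: qmat shows "foldl (**) g w = g ** foldl (**) (mat 1 :: qmat) w"
proof (induction w arbitrary: g)
  case Nil then show ?case by (simp add: matrix_mul_rid)
next
  case (Cons x w)
  have "foldl (**) g (x # w) = (g ** x) ** foldl (**) (mat 1) w" using Cons.IH[of "g ** x"] by simp
  also have "\<dots> = g ** (((mat 1::qmat) ** x) ** foldl (**) (mat 1) w)" by (simp add: matrix_mul_assoc matrix_mul_lid)
  also have "\<dots> = g ** foldl (**) (mat 1) (x # w)" using Cons.IH[of "(mat 1::qmat) ** x"] by simp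
  finally show ?case .
qed

lemma mat1_Em: "(mat 1 :: qmat) = Em m 0 0" unfolding mat1 Em_def by simp
lemma genA_Em: "genA = Em m 0 1" unfolding genA_def Em_def by simp
lemma genT_Em: "genT m = Em m 1 0" unfolding genT_def Em_def by simp

lemma gens_Em: assumes "m \<ge> 2" "x \<in> gens m" shows "\<exists>d r. x = Em m d r \<and> \<bar>d\<bar> \<le> 1 \<and> r \<in> Zinv m"
proof -
  have "mat2 1 (-1) 0 1 = Em m 0 (-1)" unfolding Em_def by simp
  moreover have "mat2 (1 / of_nat m) 0 0 1 = Em m (-1) 0" unfolding Em_def
    by (simp add: power_int_minus divide_inverse)
  moreover have "(1::rat) \<in> Zinv m" "(-1::rat) \<in> Zinv m" "(0::rat) \<in> Zinv m"
    using Zinv_int[of 1 m] Zinv_int[of "-1" m] Zinv_int[of 0 m] by auto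
  ultimately show ?thesis using assms(2) unfolding gens_def genA_Em[of m] genT_Em by fastforce
qed

lemma word_exp: assumes "m \<ge> 2" "set w \<subseteq> gens m" "r \<in> Zinv m"
  shows "\<exists>e s. foldl (**) (Em m k r) w = Em m e s \<and> \<bar>e - k\<bar> \<le> int (length w) \<and> s \<in> Zinv m"
  using assms(2,3)
proof (induction w arbitrary: k r)
  case Nil then show ?case by auto
next
  case (Cons x w)
  have m0: "m > 0" using assms by simp
  have "x \<in> gens m" using Cons.prems(1) by simp
  then obtain d r' where x: "x = Em m d r'" "\<bar>d\<bar> \<le> 1" "r' \<in> Zinv m" using gens_Em[OF assms(1)] by blast
  have "Em m k r ** x = Em m (k + d) (of_nat m powi k * r' + r)" using x Em_mult[OF m0] by simp
  moreover have z: "of_nat m powi k * r' + r \<in> Zinv m"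
    using Zinv_add[OF m0 Zinv_powi_mult[OF m0 x(3)] Cons.prems(2)] .
  have "\<exists>e s. foldl (**) (Em m (k+d) (of_nat m powi k * r' + r)) w = Em m e s \<and> \<bar>e - (k + d)\<bar> \<le> int (length w) \<and> s \<in> Zinv m"
    using Cons.IH[where k="k+d"] Cons.prems(1) z by simp
  ultimately obtain e s where "foldl (**) (Em m k r ** x) w = Em m e s" "\<bar>e - (k + d)\<bar> \<le> int (length w)" "s \<in> Zinv m"
    by auto
  then show ?case using x(2) by (intro exI[of _ e] exI[of _ s]) auto
qed

fun wd :: "nat \<Rightarrow> nat \<Rightarrow> nat \<Rightarrow> qmat list" where
  "wd m 0 t = []"
| "wd m (Suc n) t = replicate (t mod m) genA @ [genT m] @ wd m n (t div m)"

lemma rep_A: assumes "m > 0"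
  shows "foldl (**) (Em m e b) (replicate d genA) = Em m e (b + of_nat d * of_nat m powi e)"
proof (induction d arbitrary: b)
  case 0 then show ?case by simp
next
  case (Suc d)
  have "foldl (**) (Em m e b) (replicate (Suc d) genA) = foldl (**) (Em m e b ** genA) (replicate d genA)"
    by simp
  also have "Em m e b ** genA = Em m e (b + of_nat m powi e)" unfolding genA_Em[of m] Em_mult[OF assms] by (simp add: add.commute)
  finally show ?case using Suc.IH by (simp add: algebra_simps)
qed

lemma rep_T: assumes "m > 0"
  shows "foldl (**) (Em m e b) (replicate d (genT m)) = Em m (e + int d) b"
proof (induction d arbitrary: e)
  case 0 then show ?case by simp
next
  case (Suc d)
  have "foldl (**) (Em m e b) (replicate (Suc d) (genT m)) = foldl (**) (Em m e b ** genT m) (replicate d (genT m))"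
    by simp
  also have "Em m e b ** genT m = Em m (e+1) b" unfolding genT_Em Em_mult[OF assms] by simp
  finally show ?case using Suc.IH by (simp add: algebra_simps)
qed

lemma wd_val: assumes "m > 0"
  shows "foldl (**) (Em m (int e) b) (wd m n t) = Em m (int (e+n)) (b + of_nat m ^ e * of_nat (t mod m^n))"
proof (induction n arbitrary: e b t)
  case 0 then show ?case by simp
next
  case (Suc n)
  have "foldl (**) (Em m (int e) b) (wd m (Suc n) t)
     = foldl (**) (foldl (**) (Em m (int e) b) (replicate (t mod m) genA) ** genT m) (wd m n (t div m))"
    by simp
  also have "foldl (**) (Em m (int e) b) (replicate (t mod m) genA) ** genT m
     = Em m (int (e+1)) (b + of_nat (t mod m) * of_nat m ^ e)"
    unfolding rep_A[OF assms] genT_Em Em_mult[OF assms] by (simp add: add.commute)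
  also have "foldl (**) \<dots> (wd m n (t div m)) = Em m (int (e + 1 + n))
      (b + of_nat (t mod m) * of_nat m ^ e + of_nat m ^ (e+1) * of_nat (t div m mod m ^ n))"
    by (rule Suc.IH)
  also have "(b + of_nat (t mod m) * of_nat m ^ e + of_nat m ^ (e+1) * of_nat (t div m mod m ^ n) :: rat)
     = b + of_nat m ^ e * of_nat (t mod m ^ Suc n)"
  proof -
    have "t mod m ^ Suc n = m * (t div m mod m ^ n) + t mod m"
      using mod_mult2_eq[of t m "m^n"] by simp
    then show ?thesis by (simp add: algebra_simps)
  qed
  finally show ?case by simp
qed

lemma wd_len: assumes "m > 0" shows "length (wd m n t) \<le> n * m"
proof (induction n arbitrary: t)
  case 0 then show ?case by simp
next
  case (Suc n)
  have "t mod m + 1 \<le> m" using assms by (simp add: Suc_leI)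
  then show ?case using Suc.IH[of "t div m"] by auto
qed

lemma wd_set: "set (wd m n t) \<subseteq> gens m"
  by (induction n arbitrary: t) (auto simp: gens_def)



lemma N_le_pow: fixes m N :: nat assumes "m \<ge> 2" "coprime N m" "N \<ge> 2" shows "N \<le> m ^ ord N m"
proof -
  have o1: "ord N m \<ge> 1" using ord_pos[OF assms(2)] by linarith
  have "m ^ ord N m \<ge> m ^ 1" using o1 assms(1) by (intro power_increasing) auto
  then have p: "m ^ ord N m - 1 > 0" using assms(1) by simp
  have "N dvd m ^ ord N m - 1" using cong_to_1_nat[OF ord[of m N]] .
  then have "N \<le> m ^ ord N m - 1" using dvd_imp_le p by blast
  then show ?thesis by simp
qed

lemma reach: assumes "m \<ge> 2" "coprime N m" "N \<ge> 2" "g \<in> Gm m" "g' \<in> Gm m"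
  shows "\<exists>w. length w \<le> (m+1) * ord N m \<and> set w \<subseteq> gens m \<and> lcoset m N (foldl (**) g w) = lcoset m N g'"
proof -
  have m0: "m > 0" using assms by simp
  define od where "od = ord N m"
  have o1: "od \<ge> 1" using ord_pos[OF assms(2)] od_def by linarith
  obtain k r where g: "g = Em m k r" "r \<in> Zinv m" using assms(4) Gm_iff by blast
  obtain k' r' where g': "g' = Em m k' r'" "r' \<in> Zinv m" using assms(5) Gm_iff by blast
  define q where "q = (r' - r) * of_nat m powi (-k)"
  have qZ: "q \<in> Zinv m" unfolding q_def using Zinv_mult[OF Zinv_diff[OF m0 g'(2) g(2)] Zinv_powi[OF m0]] .
  obtain t where t: "t < N" "q - of_nat t \<in> NZ m N" using Zinv_reduce[OF assms(1,2) _ qZ] assms(3) by auto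
  define j where "j = nat ((k' - k) mod int od)"
  have jint: "int j = (k' - k) mod int od" unfolding j_def using o1 by simp
  have "(k' - k) mod int od < int od" using o1 by simp
  then have jo: "j < od" using jint by linarith
  define w where "w = wd m od t @ replicate j (genT m)"
  have tm: "t mod m ^ od = t" using N_le_pow[OF assms(1,2,3)] t(1) unfolding od_def by simp
  have W: "foldl (**) (mat 1) w = Em m (int od + int j) (of_nat t)"
    unfolding w_def foldl_append mat1_Em[of m] using wd_val[OF m0, of 0 0 od t] rep_T[OF m0] tm by simp
  have f1: "foldl (**) g w = Em m (k + (int od + int j)) (of_nat m powi k * of_nat t + r)"
    by (subst foldl_mult) (simp add: W g Em_mult[OF m0])
  moreover have f2: "lcoset m N (Em m (k + (int od + int j)) (of_nat m powi k * of_nat t + r)) = lcoset m N g'"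
  proof -
    have Z: "of_nat m powi k * of_nat t + r \<in> Zinv m"
      using Zinv_add[OF m0 Zinv_powi_mult[OF m0 Zinv_nat] g(2)] .
    have d: "int od dvd (k + (int od + int j)) - k'"
    proof -
      have "(k + (int od + int j)) - k' = int od * (1 - (k' - k) div int od)"
        using jint div_mult_mod_eq[of "k'-k" "int od"] by (simp add: algebra_simps)
      then show ?thesis by simp
    qed
    have mk: "(of_nat m powi k :: rat) * of_nat m powi (-k) = 1"
      using m0 by (simp add: power_int_minus)
    have "(of_nat m powi k * of_nat t + r) - r' = - ((q - of_nat t) * of_nat m powi k)"
    proof -
      have "of_nat m powi k * q = (r' - r) * (of_nat m powi k * of_nat m powi (-k))"
        unfolding q_def by (simp add: algebra_simps)
      then have "of_nat m powi k * q = r' - r" using mk by simp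
      then show ?thesis by (simp add: algebra_simps)
    qed
    then have n: "(of_nat m powi k * of_nat t + r) - r' \<in> NZ m N"
      using NZ_uminus[OF NZ_mult[OF t(2) Zinv_powi[OF m0]]] by simp
    show ?thesis unfolding g'(1) coset_eq[OF assms(1,2) Z g'(2)] using d n od_def by simp
  qed
  moreover have f3: "length w \<le> (m+1) * od"
  proof -
    have "length w \<le> od * m + j" unfolding w_def using wd_len[OF m0, of od t] by simp
    then show ?thesis using jo by (simp add: algebra_simps)
  qed
  moreover have f4: "set w \<subseteq> gens m" unfolding w_def using wd_set by (auto simp: gens_def)
  show ?thesis using f1 f2 f3 f4 unfolding od_def by (intro exI[of _ w]) simp
qed

lemma dist_le: assumes "m \<ge> 2" "coprime N m" "N \<ge> 2" "g \<in> Gm m" "g' \<in> Gm m"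
  shows "cay_dist m N g g' \<le> (m+1) * ord N m"
proof -
  obtain w where w: "length w \<le> (m+1) * ord N m" "set w \<subseteq> gens m" "lcoset m N (foldl (**) g w) = lcoset m N g'"
    using reach[OF assms] by blast
  have "cay_dist m N g g' \<le> length w" unfolding cay_dist_def
    by (rule Least_le) (use w in blast)
  then show ?thesis using w(1) by linarith
qed

lemma dist_ge: assumes "m \<ge> 2" "coprime N m" "N \<ge> 2"
  shows "cay_dist m N (mat 1) (Em m (int (ord N m div 2)) 1) \<ge> max 1 (ord N m div 2)"
proof -
  have m0: "m > 0" using assms by simp
  define od where "od = ord N m"
  define jj where "jj = od div 2"
  have one: "(1::rat) \<in> Zinv m" using Zinv_int[of 1 m] by simp
  have G1: "(mat 1 :: qmat) \<in> Gm m" using Em_Gm[OF assms(1)] mat1_Em[of m] Zinv_int[of 0 m] by simp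
  have G2: "Em m (int jj) 1 \<in> Gm m" using Em_Gm[OF assms(1)] one by simp
  let ?P = "\<lambda>n. \<exists>w. length w = n \<and> set w \<subseteq> gens m \<and> lcoset m N (foldl (**) (mat 1) w) = lcoset m N (Em m (int jj) 1)"
  have ex: "\<exists>n. ?P n" using reach[OF assms G1 G2] by blast
  have bound: "n \<ge> max 1 jj" if "?P n" for n
  proof -
    obtain w where w: "length w = n" "set w \<subseteq> gens m" "lcoset m N (foldl (**) (mat 1) w) = lcoset m N (Em m (int jj) 1)"
      using \<open>?P n\<close> by blast
    obtain e s where es: "foldl (**) (Em m 0 0) w = Em m e s" "\<bar>e - 0\<bar> \<le> int (length w)" "s \<in> Zinv m"
      using word_exp[OF assms(1) w(2) Zinv_int[of 0 m], where k=0] by auto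
    have "lcoset m N (Em m e s) = lcoset m N (Em m (int jj) 1)" using w(3) es(1) mat1_Em[of m] by simp
    then have c: "int od dvd e - int jj" "s - 1 \<in> NZ m N" using coset_eq[OF assms(1,2) es(3) one] od_def by auto
    have "n \<ge> 1"
    proof (rule ccontr)
      assume "\<not> n \<ge> 1" then have "n = 0" by simp
      then have "w = []" using w(1) by (cases w) auto
      then have "s = 0" using es(1) Em_eq[OF assms(1)] by simp
      then have "of_int (-1) \<in> NZ m N" using c(2) by simp
      then have "int N dvd -1" using NZ_int[OF assms(2)] by blast
      then show False using assms(3) by simp
    qed
    moreover have "int n \<ge> int jj"
    proof -
      obtain c0 where c0: "e - int jj = int od * c0" using c(1) by blast
      have od2: "int jj \<le> int od - int jj" unfolding jj_def by linarith
      have "\<bar>e\<bar> \<ge> int jj"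
      proof (cases "c0 = 0")
        case True then show ?thesis using c0 by simp
      next
        case False
        then have "c0 \<ge> 1 \<or> c0 \<le> -1" by linarith
        then show ?thesis
        proof
          assume "c0 \<ge> 1" then have "int od * c0 \<ge> int od" by (simp add: mult_le_cancel_left1)
          then show ?thesis using c0 by linarith
        next
          assume "c0 \<le> -1" then have "int od * (- c0) \<ge> int od * 1"
            by (intro mult_left_mono) auto
          then have "int od * c0 \<le> - int od" by simp
          then show ?thesis using c0 od2 by linarith
        qed
      qed
      then show ?thesis using es(2) w(1) by linarith
    qed
    ultimately show ?thesis by simp
  qed
  have "?P (LEAST n. ?P n)" using LeastI_ex[OF ex] .
  then have "(LEAST n. ?P n) \<ge> max 1 jj" using bound by blast
  then show ?thesis unfolding cay_dist_def jj_def od_def by simp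
qed

lemma diam_bounds: assumes "m \<ge> 2" "coprime N m" "N \<ge> 2"
  shows "cay_diam m N \<le> (m+1) * ord N m" "cay_diam m N \<ge> max 1 (ord N m div 2)"
proof -
  let ?S = "{cay_dist m N g g' | g g'. g \<in> Gm m \<and> g' \<in> Gm m}"
  have one: "(1::rat) \<in> Zinv m" using Zinv_int[of 1 m] by simp
  have G1: "(mat 1 :: qmat) \<in> Gm m" using Em_Gm[OF assms(1)] mat1_Em[of m] Zinv_int[of 0 m] by simp
  have G2: "Em m (int (ord N m div 2)) 1 \<in> Gm m" using Em_Gm[OF assms(1)] one by simp
  have ne: "?S \<noteq> {}" using G1 by blast
  have ub: "\<forall>x\<in>?S. x \<le> (m+1) * ord N m" using dist_le[OF assms] by blast
  then have bdd: "bdd_above ?S" by (intro bdd_aboveI[of _ "(m+1) * ord N m"]) blast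
  show "cay_diam m N \<le> (m+1) * ord N m" unfolding cay_diam_def using ub ne by (meson cSup_least)
  have "cay_dist m N (mat 1) (Em m (int (ord N m div 2)) 1) \<in> ?S" using G1 G2 by blast
  then have "cay_dist m N (mat 1) (Em m (int (ord N m div 2)) 1) \<le> cay_diam m N"
    unfolding cay_diam_def using bdd by (rule cSup_upper)
  then show "cay_diam m N \<ge> max 1 (ord N m div 2)" using dist_ge[OF assms] by linarith
qed

lemma card_quot: assumes "m \<ge> 2" "coprime N m" "N \<ge> 2"
  shows "card (quot m N) = ord N m * N"
proof -
  have m0: "m > 0" using assms by simp
  define od where "od = ord N m"
  have o1: "od \<ge> 1" using ord_pos[OF assms(2)] od_def by linarith
  define f where "f = (\<lambda>(i::nat, t::nat). lcoset m N (Em m (int i) (of_nat t)))"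
  have eq: "quot m N = f ` ({0..<od} \<times> {0..<N})"
  proof
    show "quot m N \<subseteq> f ` ({0..<od} \<times> {0..<N})"
    proof
      fix x assume "x \<in> quot m N"
      then obtain g where "g \<in> Gm m" "x = lcoset m N g" unfolding quot_def by blast
      then obtain k r where g0: "g = Em m k r" "r \<in> Zinv m" using Gm_iff by blast
      then have g: "x = lcoset m N (Em m k r)" "r \<in> Zinv m" using \<open>x = lcoset m N g\<close> by auto
      obtain t where t: "t < N" "r - of_nat t \<in> NZ m N" using Zinv_reduce[OF assms(1,2) _ g(2)] assms(3) by auto
      define i where "i = nat (k mod int od)"
      have iint: "int i = k mod int od" unfolding i_def using o1 by simp
      have "k mod int od < int od" using o1 by simp
      then have io: "i < od" using iint by linarith
      have "int od dvd k - int i" using iint by (simp add: mod_eq_dvd_iff[symmetric])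
      then have "lcoset m N (Em m k r) = lcoset m N (Em m (int i) (of_nat t))"
        using coset_eq[OF assms(1,2) g(2) Zinv_nat] t od_def by simp
      then show "x \<in> f ` ({0..<od} \<times> {0..<N})" using g(1) io t(1) unfolding f_def by force
    qed
    show "f ` ({0..<od} \<times> {0..<N}) \<subseteq> quot m N"
      unfolding f_def quot_def using Em_Gm[OF assms(1)] Zinv_nat by auto
  qed
  have inj: "inj_on f ({0..<od} \<times> {0..<N})"
  proof (rule inj_onI)
    fix a b assume a: "a \<in> {0..<od} \<times> {0..<N}" and b: "b \<in> {0..<od} \<times> {0..<N}" and fab: "f a = f b"
    obtain i t where ai: "a = (i, t)" by fastforce
    obtain i' t' where bi: "b = (i', t')" by fastforce
    have "int od dvd int i - int i'" "(of_nat t :: rat) - of_nat t' \<in> NZ m N"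
      using fab coset_eq[OF assms(1,2) Zinv_nat Zinv_nat] unfolding ai bi f_def od_def by auto
    then have d1: "int od dvd int i - int i'" and d2: "int N dvd int t - int t'"
      using NZ_int[OF assms(2), of "int t - int t'"] by auto
    have "int i mod int od = int i' mod int od" using d1 by (simp add: mod_eq_dvd_iff)
    then have "i = i'" using a b ai bi by simp
    moreover have "int t mod int N = int t' mod int N" using d2 by (simp add: mod_eq_dvd_iff)
    then have "t = t'" using a b ai bi by simp
    ultimately show "a = b" using ai bi by simp
  qed
  have "card (quot m N) = card ({0..<od} \<times> {0..<N})" unfolding eq by (rule card_image[OF inj])
  then show ?thesis by (simp add: od_def)
qed


lemma fwd: fixes \<alpha> C M x n :: real
  assumes "0 < \<alpha>" "\<alpha> < 1" "C > 0" "M > 0" "x > 0" "n > 0" "M * x \<ge> C * (x * n) powr \<alpha>"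
  shows "x \<ge> (C/M) powr (1/(1-\<alpha>)) * n powr (\<alpha>/(1-\<alpha>))"
proof -
  have "C * (x powr \<alpha> * n powr \<alpha>) \<le> M * x" using assms(7) assms(5,6) by (simp add: powr_mult)
  then have "(C/M) * n powr \<alpha> \<le> x / x powr \<alpha>" using assms(4,5) by (simp add: field_simps)
  also have "x / x powr \<alpha> = x powr (1 - \<alpha>)" using assms(5) by (simp add: powr_diff)
  finally have h: "(C/M) * n powr \<alpha> \<le> x powr (1 - \<alpha>)" .
  have "((C/M) * n powr \<alpha>) powr (1/(1-\<alpha>)) \<le> (x powr (1 - \<alpha>)) powr (1/(1-\<alpha>))"
    using h assms by (intro powr_mono2) auto
  also have "(x powr (1 - \<alpha>)) powr (1/(1-\<alpha>)) = x" using assms(2,5) by (simp add: powr_powr)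
  also have "((C/M) * n powr \<alpha>) powr (1/(1-\<alpha>)) = (C/M) powr (1/(1-\<alpha>)) * n powr (\<alpha>/(1-\<alpha>))"
  proof -
    have "((C/M) * n powr \<alpha>) powr (1/(1-\<alpha>)) = (C/M) powr (1/(1-\<alpha>)) * (n powr \<alpha>) powr (1/(1-\<alpha>))"
      using assms by (intro powr_mult)
    also have "(n powr \<alpha>) powr (1/(1-\<alpha>)) = n powr (\<alpha>/(1-\<alpha>))" by (simp add: powr_powr)
    finally show ?thesis .
  qed
  finally show ?thesis .
qed

lemma bwd: fixes \<alpha> c x n :: real
  assumes "0 < \<alpha>" "\<alpha> < 1" "c > 0" "x > 0" "n > 0" "x \<ge> c * n powr (\<alpha>/(1-\<alpha>))"
  shows "c powr (1-\<alpha>) * (x * n) powr \<alpha> \<le> x"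
proof -
  have "n powr (\<alpha>/(1-\<alpha>)) \<le> x / c" using assms(3,6) by (simp add: field_simps)
  then have "(n powr (\<alpha>/(1-\<alpha>))) powr (1-\<alpha>) \<le> (x / c) powr (1-\<alpha>)"
    using assms by (intro powr_mono2) auto
  also have "(n powr (\<alpha>/(1-\<alpha>))) powr (1-\<alpha>) = n powr \<alpha>" using assms(2) by (simp add: powr_powr)
  finally have h: "n powr \<alpha> \<le> x powr (1-\<alpha>) / c powr (1-\<alpha>)" using assms by (simp add: powr_divide)
  have "c powr (1-\<alpha>) * (x * n) powr \<alpha> = c powr (1-\<alpha>) * x powr \<alpha> * n powr \<alpha>"
    using assms by (simp add: powr_mult)
  also have "\<dots> \<le> c powr (1-\<alpha>) * x powr \<alpha> * (x powr (1-\<alpha>) / c powr (1-\<alpha>))"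
    using h assms by (intro mult_left_mono) auto
  also have "\<dots> = x powr \<alpha> * x powr (1-\<alpha>)" using assms by simp
  also have "\<dots> = x" using assms by (simp add: powr_add[symmetric])
  finally show ?thesis .
qed

lemma three_max: fixes o' :: nat shows "3 * max 1 (o' div 2) \<ge> o'"
  by presburger

theorem proposition3p4:
  fixes m :: nat and \<alpha> :: real and N :: "nat \<Rightarrow> nat"
  assumes "m \<ge> 2" and "0 < \<alpha>" and "\<alpha> < 1" and "arith_box_seq m N"
  shows "property_D \<alpha> m N \<longleftrightarrow>
    (\<exists>c>0. \<forall>k. real (ord (N k) m) \<ge> c * real (N k) powr (\<alpha> / (1 - \<alpha>)))"
proof -
  have N2: "N k \<ge> 2" and cop: "coprime (N k) m" for k
    using assms(4) unfolding arith_box_seq_def by auto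
  have card: "real (card (quot m (N k))) = real (ord (N k) m) * real (N k)" for k
    using card_quot[OF assms(1) cop N2] by simp
  have Dub: "real (cay_diam m (N k)) \<le> (real m + 1) * real (ord (N k) m)" for k
  proof -
    have "cay_diam m (N k) \<le> (m+1) * ord (N k) m" using diam_bounds(1)[OF assms(1) cop N2] .
    then show ?thesis by (metis of_nat_1 of_nat_add of_nat_le_iff of_nat_mult)
  qed
  have Dlb: "real (ord (N k) m) \<le> 3 * real (cay_diam m (N k))" for k
  proof -
    have "ord (N k) m \<le> 3 * cay_diam m (N k)"
      using diam_bounds(2)[OF assms(1) cop N2, of k] three_max[of "ord (N k) m"] by linarith
    then show ?thesis by (metis of_nat_le_iff of_nat_mult of_nat_numeral)
  qed
  have opos: "real (ord (N k) m) > 0" for k using ord_pos[OF cop] by simp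
  have npos: "real (N k) > 0" for k using N2[of k] by simp
  show ?thesis
  proof
    assume "property_D \<alpha> m N"
    then obtain C where C: "C > 0" "\<And>k. real (cay_diam m (N k)) \<ge> C * real (card (quot m (N k))) powr \<alpha>"
      unfolding property_D_def by blast
    define c where "c = (C / (real m + 1)) powr (1/(1-\<alpha>))"
    have cpos: "c > 0" unfolding c_def using C(1) by simp
    have "real (ord (N k) m) \<ge> c * real (N k) powr (\<alpha> / (1 - \<alpha>))" for k
    proof -
      have "(real m + 1) * real (ord (N k) m) \<ge> C * (real (ord (N k) m) * real (N k)) powr \<alpha>"
        using C(2)[of k] Dub[of k] card[of k] by simp
      then show ?thesis unfolding c_def
        using fwd[OF assms(2,3) C(1) _ opos npos] by simp
    qed
    then show "\<exists>c>0. \<forall>k. real (ord (N k) m) \<ge> c * real (N k) powr (\<alpha> / (1 - \<alpha>))" using cpos by blast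
  next
    assume "\<exists>c>0. \<forall>k. real (ord (N k) m) \<ge> c * real (N k) powr (\<alpha> / (1 - \<alpha>))"
    then obtain c where c: "c > 0" "\<And>k. real (ord (N k) m) \<ge> c * real (N k) powr (\<alpha> / (1 - \<alpha>))" by blast
    define C where "C = c powr (1 - \<alpha>) / 3"
    have Cpos: "C > 0" unfolding C_def using c(1) by simp
    have "real (cay_diam m (N k)) \<ge> C * real (card (quot m (N k))) powr \<alpha>" for k
    proof -
      have "c powr (1-\<alpha>) * (real (ord (N k) m) * real (N k)) powr \<alpha> \<le> real (ord (N k) m)"
        using bwd[OF assms(2,3) c(1) opos npos c(2)] .
      then show ?thesis unfolding C_def card using Dlb[of k] by simp
    qed
    then show "property_D \<alpha> m N" unfolding property_D_def using Cpos by blast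
  qed
qed

end
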